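(* Let $d=1$. There is a constant $c_1$ depending only on the dimension such that for all $N\ge1$, $$\text{i) } E_Q(Z(N)^2)\le \sum_{n=0}^N\left(c_1c^2_{N,1}N^{1/2}\right)^n,\qquad \text{ii) } E_Q(K(N)^2)\le N^2\sum_{n=0}^N\left(c_1c^2_{N,1}N^{1/2}\right)^n.$$
   Context: $P^N_0$ is the uniform probability measure on nearest-neighbour walks $\omega:\{0,\dots,N\}\to\mathbb{Z}$ with $\omega(0)=0$, $|\omega(n)-\omega(n-1)|=1$ (each of weight $2^{-N}$). The environment $h=\{h(n,x):n\in\mathbb{N},x\in\mathbb{Z}\}$ consists of i.i.d. random variables with $h(n,x)=\pm1$ each with probability $1/2$ on a probability space $(H,\mathcal{G},Q)$, independent of the walk; $E_Q$ is expectation under $Q$. $(c_{N,1})$ is a sequence of positive numbers with $\lim_{N\to\infty}c_{N,1}^2N^{1/2}=0$. $Z(N)=\int\prod_{n=1}^N[1+c_{N,1}h(n,\omega(n))]\,dP^N_0(\omega)$ and $K(N)=\int\prod_{n=1}^N[1+c_{N,1}h(n,\omega(n))]\,\omega(N)^2\,dP^N_0(\omega)$. *)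

theory Defs
  imports "HOL-Probability.Probability"
begin

text \<open>Nearest-neighbour walks of length N on Z started at 0, extended by 0 after time N
  (so the set is finite and in bijection with walks on {0..N}).\<close>
definition walks :: "nat \<Rightarrow> (nat \<Rightarrow> int) set" where
  "walks N = {w. w 0 = 0 \<and> (\<forall>n\<in>{1..N}. \<bar>w n - w (n - 1)\<bar> = 1) \<and> (\<forall>n>N. w n = 0)}"

definition walk_integral :: "nat \<Rightarrow> ((nat \<Rightarrow> int) \<Rightarrow> real) \<Rightarrow> real" where
  "walk_integral N F = (\<Sum>w\<in>walks N. F w / 2 ^ N)"

definition Zpart :: "(nat \<Rightarrow> real) \<Rightarrow> (nat \<times> int \<Rightarrow> 'q \<Rightarrow> real) \<Rightarrow> nat \<Rightarrow> 'q \<Rightarrow> real" where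
  "Zpart c h N q = walk_integral N (\<lambda>w. \<Prod>n\<in>{1..N}. 1 + c N * h (n, w n) q)"

definition Kpart :: "(nat \<Rightarrow> real) \<Rightarrow> (nat \<times> int \<Rightarrow> 'q \<Rightarrow> real) \<Rightarrow> nat \<Rightarrow> 'q \<Rightarrow> real" where
  "Kpart c h N q = walk_integral N (\<lambda>w. (\<Prod>n\<in>{1..N}. 1 + c N * h (n, w n) q) * real_of_int (w N) ^ 2)"

end

theory Submission
  imports Defs
begin


definition pre :: "nat \<Rightarrow> int \<Rightarrow> (nat \<Rightarrow> int) \<Rightarrow> nat \<Rightarrow> int" where
  "pre N s w n = (if n = 0 then 0 else if n \<le> Suc N then s + w (n-1) else 0)"

lemma walks_0: "walks 0 = {\<lambda>_. 0}"
  by (auto simp: walks_def fun_eq_iff) (metis gr0I)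

lemma pre_in: "s \<in> {-1,1} \<Longrightarrow> w \<in> walks N \<Longrightarrow> pre N s w \<in> walks (Suc N)"
proof -
  assume s: "s \<in> {-1,1}" and w: "w \<in> walks N"
  have "\<bar>pre N s w n - pre N s w (n-1)\<bar> = 1" if "n \<in> {1..Suc N}" for n
  proof (cases "n = 1")
    case True then show ?thesis using s w by (auto simp: pre_def walks_def)
  next
    case False
    then have "n - 1 \<in> {1..N}" using that by auto
    moreover have "\<forall>n\<in>{1..N}. \<bar>w n - w (n-1)\<bar> = 1" using w unfolding walks_def by blast
    ultimately have "\<bar>w (n-1) - w (n-1-1)\<bar> = 1" by blast
    then show ?thesis using that False by (auto simp: pre_def)
  qed
  then show ?thesis by (auto simp: walks_def pre_def)
qed

lemma walks_Suc_sub: "walks (Suc N) \<subseteq> (\<lambda>(s,w). pre N s w) ` ({-1,1} \<times> walks N)"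
proof
  fix v assume v: "v \<in> walks (Suc N)"
  define w where "w m = (if m \<le> N then v (Suc m) - v 1 else 0)" for m
  have v0: "v 0 = 0" and vd: "\<And>n. n \<in> {1..Suc N} \<Longrightarrow> \<bar>v n - v (n-1)\<bar> = 1" and vz: "\<And>n. n > Suc N \<Longrightarrow> v n = 0"
    using v by (auto simp: walks_def)
  have s: "v 1 \<in> {-1,1}" using vd[of 1] v0 by auto
  have "\<bar>w n - w (n-1)\<bar> = 1" if "n \<in> {1..N}" for n
    using vd[of "Suc n"] that by (auto simp: w_def)
  then have w: "w \<in> walks N"
    unfolding walks_def by (auto simp: w_def)
  have "v = pre N (v 1) w"
    by (rule ext) (auto simp: pre_def w_def v0 vz not_le)
  thus "v \<in> (\<lambda>(s,w). pre N s w) ` ({-1,1} \<times> walks N)" using s w by force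
qed

lemma walks_Suc: "walks (Suc N) = (\<lambda>(s,w). pre N s w) ` ({-1,1} \<times> walks N)"
  by (rule equalityI[OF walks_Suc_sub]) (auto intro: pre_in)

lemma inj_pre: "inj_on (\<lambda>(s,w). pre N s w) ({-1,1} \<times> walks N)"
proof (rule inj_onI, clarify)
  fix s w s' w' assume a: "s \<in> {-1,1}" "w \<in> walks N" "s' \<in> {-1,1}" "w' \<in> walks N"
    and e: "pre N s w = pre N s' w'"
  have w0: "w 0 = 0" "w' 0 = 0" using a by (auto simp: walks_def)
  have ss: "s = s'" using fun_cong[OF e, of 1] w0 by (simp add: pre_def)
  have "w m = w' m" for m
  proof (cases "m \<le> N")
    case True
    then show ?thesis using fun_cong[OF e, of "Suc m"] ss by (simp add: pre_def)
  next
    case False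
    then show ?thesis using a by (auto simp: walks_def)
  qed
  thus "s = s' \<and> w = w'" using ss by auto
qed

lemma finite_walks: "finite (walks N)"
  by (induction N) (auto simp: walks_0 walks_Suc)

lemma sum_walks_Suc: "(\<Sum>v\<in>walks (Suc N). F v) = (\<Sum>s\<in>{-1,1::int}. \<Sum>w\<in>walks N. F (pre N s w))"
proof -
  have "(\<Sum>v\<in>walks (Suc N). F v) = sum (F \<circ> (\<lambda>(s,w). pre N s w)) ({-1,1} \<times> walks N)"
    unfolding walks_Suc by (rule sum.reindex[OF inj_pre])
  also have "F \<circ> (\<lambda>(s,w). pre N s w) = (\<lambda>(s,w). F (pre N s w))"
    by (auto simp: fun_eq_iff)
  also have "sum (\<lambda>(s,w). F (pre N s w)) ({-1,1} \<times> walks N) = (\<Sum>s\<in>{-1,1::int}. \<Sum>w\<in>walks N. F (pre N s w))"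
    by (rule sum.cartesian_product[symmetric])
  finally show ?thesis .
qed

lemma pre_Suc: "pre N s w (Suc N) = s + w N"
  by (simp add: pre_def)

lemma walk_bound: "w \<in> walks N \<Longrightarrow> n \<le> N \<Longrightarrow> \<bar>w n\<bar> \<le> int n"
proof (induction n)
  case 0 then show ?case by (simp add: walks_def)
next
  case (Suc n)
  have "Suc n \<in> {1..N}" using Suc.prems by auto
  then have "\<bar>w (Suc n) - w n\<bar> = 1" using Suc.prems unfolding walks_def by fastforce
  then show ?case using Suc by auto
qed


lemma card_walks: "(\<Sum>w\<in>walks N. (1::real)) = 2 ^ N"
  apply (induction N)
   apply (simp add: walks_0)
  apply (subst sum_walks_Suc)
  apply simp
  done

lemma moment2: "(\<Sum>w\<in>walks N. real_of_int (w N) ^ 2) = real N * 2 ^ N"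
proof (induction N)
  case 0 then show ?case by (simp add: walks_0)
next
  case (Suc N)
  have "(\<Sum>w\<in>walks (Suc N). real_of_int (w (Suc N)) ^ 2)
      = (\<Sum>w\<in>walks N. (real_of_int (w N) - 1)^2 + (real_of_int (w N) + 1)^2)"
    by (simp add: sum_walks_Suc pre_Suc sum.distrib algebra_simps)
  also have "\<dots> = (\<Sum>w\<in>walks N. 2 * real_of_int (w N) ^ 2 + 2)"
    by (simp add: power2_eq_square algebra_simps)
  also have "\<dots> = 2 * (real N * 2 ^ N) + 2 * 2 ^ N"
    using Suc card_walks[of N] by (simp add: sum.distrib sum_distrib_left[symmetric])
  finally show ?case by (simp add: algebra_simps)
qed

lemma moment4: "(\<Sum>w\<in>walks N. real_of_int (w N) ^ 4) = (3 * real N ^ 2 - 2 * real N) * 2 ^ N"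
proof (induction N)
  case 0 then show ?case by (simp add: walks_0)
next
  case (Suc N)
  have "(\<Sum>w\<in>walks (Suc N). real_of_int (w (Suc N)) ^ 4)
      = (\<Sum>w\<in>walks N. (real_of_int (w N) - 1)^4 + (real_of_int (w N) + 1)^4)"
    by (simp add: sum_walks_Suc pre_Suc sum.distrib algebra_simps)
  also have "\<dots> = (\<Sum>w\<in>walks N. 2 * real_of_int (w N) ^ 4 + 12 * real_of_int (w N) ^ 2 + 2)"
    by (intro sum.cong refl) (simp add: power4_eq_xxxx power2_eq_square algebra_simps)
  also have "\<dots> = 2 * ((3 * real N ^ 2 - 2 * real N) * 2 ^ N) + 12 * (real N * 2 ^ N) + 2 * 2 ^ N"
    using Suc moment2[of N] card_walks[of N] by (simp add: sum.distrib sum_distrib_left[symmetric])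
  finally show ?case by (simp add: algebra_simps power2_eq_square)
qed


definition Lg :: "nat \<Rightarrow> int \<Rightarrow> (nat \<Rightarrow> int) \<Rightarrow> (nat \<Rightarrow> int) \<Rightarrow> nat" where
  "Lg N d w w' = card {n\<in>{1..N}. d + w n - w' n = 0}"

lemma Lg_le: "Lg N d w w' \<le> N"
proof -
  have "Lg N d w w' \<le> card {1..N}" unfolding Lg_def by (rule card_mono) auto
  thus ?thesis by simp
qed

lemma Lg_pre:
  assumes "w \<in> walks N" "w' \<in> walks N"
  shows "Lg (Suc N) d (pre N s w) (pre N s' w') = (if d + s - s' = 0 then 1 else 0) + Lg N (d+s-s') w w'"
proof -
  have w0: "w 0 = 0" "w' 0 = 0" using assms by (auto simp: walks_def)
  let ?P = "\<lambda>m. d + s - s' + w m - w' m = 0"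
  have e1: "{n\<in>{1..Suc N}. d + pre N s w n - pre N s' w' n = 0} = Suc ` {m\<in>{0..N}. ?P m}"
  proof
    show "{n\<in>{1..Suc N}. d + pre N s w n - pre N s' w' n = 0} \<subseteq> Suc ` {m\<in>{0..N}. ?P m}"
    proof
      fix n assume n: "n \<in> {n\<in>{1..Suc N}. d + pre N s w n - pre N s' w' n = 0}"
      then have "n = Suc (n-1)" "n - 1 \<in> {m\<in>{0..N}. ?P m}" by (auto simp: pre_def)
      then show "n \<in> Suc ` {m\<in>{0..N}. ?P m}" by (metis imageI)
    qed
    show "Suc ` {m\<in>{0..N}. ?P m} \<subseteq> {n\<in>{1..Suc N}. d + pre N s w n - pre N s' w' n = 0}"
      by (auto simp: pre_def)
  qed
  have e2: "{m\<in>{0..N}. ?P m} = (if d + s - s' = 0 then insert 0 else (\<lambda>X. X)) {m\<in>{1..N}. ?P m}"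
  proof -
    have "?P 0 \<longleftrightarrow> d + s - s' = 0" using w0 by simp
    moreover have "{0..N} = insert 0 {1..N}" by auto
    ultimately show ?thesis by auto
  qed
  have "Lg (Suc N) d (pre N s w) (pre N s' w') = card {m\<in>{0..N}. ?P m}"
    unfolding Lg_def e1 by (rule card_image) simp
  also have "\<dots> = (if d + s - s' = 0 then 1 else 0) + Lg N (d+s-s') w w'"
    unfolding e2 Lg_def by (auto simp: card_insert_if)
  finally show ?thesis .
qed

definition S :: "nat \<Rightarrow> nat \<Rightarrow> int \<Rightarrow> real" where
  "S k N d = (\<Sum>w\<in>walks N. \<Sum>w'\<in>walks N. real (Lg N d w w' choose k)) / 4 ^ N"

lemma S_0: "S 0 N d = 1"
proof -
  have "(\<Sum>w\<in>walks N. \<Sum>w'\<in>walks N. (1::real)) = 2^N * 2^N"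
    using card_walks[of N] by simp
  also have "\<dots> = 4 ^ N" by (simp add: power_mult_distrib[symmetric])
  finally show ?thesis by (simp add: S_def)
qed

lemma S_zero: "S (Suc k) 0 d = 0"
  by (simp add: S_def walks_0 Lg_def)

lemma S_nonneg: "S k N d \<ge> 0"
  unfolding S_def by (intro divide_nonneg_pos sum_nonneg) auto

lemma aux4: "a * 4 ^ Suc N = 4 ^ N * T \<Longrightarrow> a = T / (4::real)"
  by (simp add: field_simps)

lemma S_Suc: "S (Suc k) (Suc N) d = (\<Sum>s\<in>{-1,1::int}. \<Sum>s'\<in>{-1,1::int}.
     S (Suc k) N (d+s-s') + (if d+s-s'=0 then S k N (d+s-s') else 0)) / 4"
proof -
  define g where "g s s' w w' = (if d+s-s' = 0 then real (Lg N (d+s-s') w w' choose Suc k) + real (Lg N (d+s-s') w w' choose k)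
      else real (Lg N (d+s-s') w w' choose Suc k))" for s s' w w'
  have "S (Suc k) (Suc N) d * 4 ^ Suc N = (\<Sum>v\<in>walks (Suc N). \<Sum>v'\<in>walks (Suc N). real (Lg (Suc N) d v v' choose Suc k))"
    by (simp add: S_def)
  also have "\<dots> = (\<Sum>s\<in>{-1,1::int}. \<Sum>w\<in>walks N. \<Sum>s'\<in>{-1,1::int}. \<Sum>w'\<in>walks N. real (Lg (Suc N) d (pre N s w) (pre N s' w') choose Suc k))"
    by (simp only: sum_walks_Suc)
  also have "\<dots> = (\<Sum>s\<in>{-1,1::int}. \<Sum>w\<in>walks N. \<Sum>s'\<in>{-1,1::int}. \<Sum>w'\<in>walks N. g s s' w w')"
    by (intro sum.cong refl) (simp add: Lg_pre g_def)
  also have "\<dots> = (\<Sum>s\<in>{-1,1::int}. \<Sum>s'\<in>{-1,1::int}. \<Sum>w\<in>walks N. \<Sum>w'\<in>walks N. g s s' w w')"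
    by (intro sum.cong refl sum.swap)
  also have "\<dots> = (\<Sum>s\<in>{-1,1::int}. \<Sum>s'\<in>{-1,1::int}.
     4^N * (S (Suc k) N (d+s-s') + (if d+s-s'=0 then S k N (d+s-s') else 0)))"
    by (intro sum.cong refl) (simp add: g_def S_def sum.distrib add_divide_distrib[symmetric])
  also have "\<dots> = 4^N * (\<Sum>s\<in>{-1,1::int}. \<Sum>s'\<in>{-1,1::int}.
     (S (Suc k) N (d+s-s') + (if d+s-s'=0 then S k N (d+s-s') else 0)))"
    by (simp only: sum_distrib_left)
  finally show ?thesis by (rule aux4)
qed

definition binz :: "nat \<Rightarrow> int \<Rightarrow> real" where
  "binz n j = (if 0 \<le> j \<and> j \<le> int n then real (n choose nat j) else 0)"

lemma binz_Suc: "binz (Suc n) j = binz n (j-1) + binz n j"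
proof (cases "j \<le> 0")
  case True
  then show ?thesis by (cases "j = 0") (auto simp: binz_def)
next
  case False
  define i where "i = nat j - 1"
  have i: "j = int (Suc i)" using False by (simp add: i_def)
  have nj: "nat j = Suc i" "nat (j-1) = i" "j - 1 = int i" using i by auto
  show ?thesis
  proof (cases "Suc i \<le> n")
    case True
    then show ?thesis using i unfolding binz_def nj by simp
  next
    case False
    then have "Suc i = Suc n \<or> Suc i > Suc n" by auto
    then show ?thesis using i unfolding binz_def nj by (auto simp: binomial_eq_0)
  qed
qed

definition pp :: "nat \<Rightarrow> int \<Rightarrow> real" where
  "pp m d = (if even d then binz (2*m) (int m + d div 2) / 4^m else 0)"

lemma pp_0: "pp 0 d = (if d = 0 then 1 else 0)"
  by (auto simp: pp_def binz_def)

lemma pp_nonneg: "pp m d \<ge> 0"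
  by (auto simp: pp_def binz_def)

lemma pp_Suc: "pp (Suc m) d = (\<Sum>s\<in>{-1,1::int}. \<Sum>s'\<in>{-1,1::int}. pp m (d+s-s')) / 4"
proof (cases "even d")
  case True
  then obtain j where j: "d = 2*j" by auto
  have "binz (2 * Suc m) (int (Suc m) + j) = binz (2*m) (int m + j - 1) + 2 * binz (2*m) (int m + j) + binz (2*m) (int m + j + 1)"
  proof -
    have "2 * Suc m = Suc (Suc (2*m))" by simp
    then show ?thesis by (simp only: binz_Suc) (simp add: algebra_simps)
  qed
  moreover have "(d + 1 - 1) div 2 = j" "(d - 1 - 1) div 2 = j - 1" "(d + 1 + 1) div 2 = j + 1" "(d - 1 + 1) div 2 = j"
    using j by auto
  moreover have "even (d+1-1)" "even (d-1-1)" "even (d+1+1)" "even (d-1+1)" using True by auto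
  ultimately show ?thesis using j by (simp add: pp_def field_simps)
next
  case False
  then show ?thesis by (simp add: pp_def)
qed

lemma pp_1: "(\<Sum>s\<in>{-1,1::int}. \<Sum>s'\<in>{-1,1::int}. (if d+s-s'=0 then 1 else 0::real)) / 4 = pp 1 d"
  by (simp add: pp_Suc[of 0] pp_0)


lemma sum4: "(\<Sum>s\<in>{-1,1::int}. \<Sum>s'\<in>{-1,1::int}. (f::int\<Rightarrow>real) (d+s-s')) = 2 * f d + f (d-2) + f (d+2)"
proof -
  have "d + - 1 - - 1 = d" "d + 1 - 1 = d" "d + -1 - 1 = d - 2" "d + 1 - - 1 = d + 2" by simp_all
  then show ?thesis by (simp add: algebra_simps)
qed

lemma S_Suc': "S (Suc k) (Suc N) d = (2 * S (Suc k) N d + S (Suc k) N (d-2) + S (Suc k) N (d+2)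
   + 2 * (if d = 0 then S k N 0 else 0) + (if d - 2 = 0 then S k N 0 else 0) + (if d + 2 = 0 then S k N 0 else 0)) / 4"
proof -
  have "S (Suc k) (Suc N) d = (\<Sum>s\<in>{-1,1::int}. \<Sum>s'\<in>{-1,1::int}.
     (\<lambda>e. S (Suc k) N e + (if e=0 then S k N 0 else 0)) (d+s-s')) / 4"
    unfolding S_Suc by (intro arg_cong[where f="\<lambda>x. x / 4"] sum.cong refl) auto
  then show ?thesis by (simp only: sum4) (simp add: algebra_simps)
qed

lemma pp_Suc': "pp (Suc m) d = (2 * pp m d + pp m (d-2) + pp m (d+2)) / 4"
  by (simp only: pp_Suc sum4)

lemma S_decomp: "S (Suc k) N d = (\<Sum>m=1..N. pp m d * S k (N-m) 0)"
proof (induction N arbitrary: d)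
  case 0
  then show ?case by (simp add: S_zero)
next
  case (Suc N)
  define X where "X m = S k (N-m) 0" for m
  have "S (Suc k) (Suc N) d = (2 * (\<Sum>m=1..N. pp m d * X m) + (\<Sum>m=1..N. pp m (d-2) * X m) + (\<Sum>m=1..N. pp m (d+2) * X m)
   + (2 * (if d = 0 then 1 else 0) + (if d - 2 = 0 then 1 else 0) + (if d + 2 = 0 then 1 else 0)) * S k N 0) / 4"
    unfolding S_Suc' Suc.IH X_def by (simp add: algebra_simps)
  also have "\<dots> = (\<Sum>m=1..N. pp (Suc m) d * X m) + pp 1 d * S k N 0"
    by (simp add: pp_Suc' pp_0 sum.distrib sum_distrib_left sum_distrib_right sum_divide_distrib algebra_simps add_divide_distrib)
  also have "\<dots> = (\<Sum>m=1..Suc N. pp m d * S k (Suc N - m) 0)"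
  proof -
    have "(\<Sum>m=1..Suc N. pp m d * S k (Suc N - m) 0) = pp 1 d * S k N 0 + (\<Sum>m=Suc 1..Suc N. pp m d * S k (Suc N - m) 0)"
      by (subst sum.atLeast_Suc_atMost) auto
    also have "(\<Sum>m=Suc 1..Suc N. pp m d * S k (Suc N - m) 0) = (\<Sum>m=1..N. pp (Suc m) d * X m)"
      by (subst sum.shift_bounds_cl_Suc_ivl) (simp add: X_def)
    finally show ?thesis by simp
  qed
  finally show ?case .
qed

declare binomial_Suc_Suc[simp del]

lemma central_rec: "Suc m * ((2 * Suc m) choose Suc m) = 2 * (2*m+1) * ((2*m) choose m)"
proof -
  have a: "Suc m * (Suc (Suc (2*m)) choose Suc m) = Suc (Suc (2*m)) * (Suc (2*m) choose m)"
    by (rule Suc_times_binomial)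
  have b: "Suc m * (Suc (2*m) choose Suc m) = Suc (2*m) * ((2*m) choose m)"
    by (rule Suc_times_binomial)
  from Suc_times_binomial_add[of m m] have "Suc m * (Suc (m + m) choose Suc m) = Suc m * (Suc (m + m) choose m)" .
  then have "Suc (m + m) choose Suc m = Suc (m + m) choose m" by (metis mult_cancel1 nat.simps(3))
  then have c: "Suc (2*m) choose Suc m = Suc (2*m) choose m" by (simp only: mult_2)
  have "Suc m * (Suc m * ((2 * Suc m) choose Suc m)) = Suc m * (2 * (2*m+1) * ((2*m) choose m))"
  proof -
    have "Suc m * (Suc m * ((2 * Suc m) choose Suc m)) = Suc m * (Suc (Suc (2*m)) * (Suc (2*m) choose m))"
      using a by simp
    also have "\<dots> = Suc (Suc (2*m)) * (Suc m * (Suc (2*m) choose Suc m))" using c by simp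
    also have "\<dots> = Suc (Suc (2*m)) * (Suc (2*m) * ((2*m) choose m))" using b by simp
    also have "\<dots> = Suc m * (2 * (2*m+1) * ((2*m) choose m))" by simp
    finally show ?thesis .
  qed
  then show ?thesis by (metis mult_cancel1 Suc_neq_Zero)
qed

lemma pp0_eq: "pp m 0 = real ((2*m) choose m) / 4^m"
  by (simp add: pp_def binz_def)

lemma aux_frac: "(q::real) > 0 \<Longrightarrow> (m::real) \<ge> 0 \<Longrightarrow> (2*(2*m+1)*Y/(m+1)) / (4*q) = Y/q * (2*m+1)/(2*m+2)"
proof -
  assume q: "q > 0" and m: "m \<ge> 0"
  have "(2*(2*m+1)*Y/(m+1)) / (4*q) = (2*(2*m+1)*Y) / ((m+1)*(4*q))" by simp
  also have "\<dots> = (Y*(2*m+1)) / (q*(2*m+2))"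
  proof -
    have n1: "(m+1)*(4*q) \<noteq> 0" and n2: "q*(2*m+2) \<noteq> 0" using q m by simp_all
    show ?thesis by (rule frac_eq_eq[OF n1 n2, THEN iffD2]) (simp add: algebra_simps)
  qed
  also have "\<dots> = Y/q * (2*m+1)/(2*m+2)" by simp
  finally show ?thesis .
qed

lemma pp0_sq: "(pp m 0)^2 * (2 * real m + 1) \<le> 1"
proof (induction m)
  case 0 then show ?case by (simp add: pp0_eq)
next
  case (Suc m)
  have r: "pp (Suc m) 0 = pp m 0 * (2 * real m + 1) / (2 * real m + 2)"
  proof -
    define X where "X = real ((2 * Suc m) choose Suc m)"
    define Y where "Y = real ((2 * m) choose m)"
    have "real (Suc m) * real ((2 * Suc m) choose Suc m) = 2 * (2*real m+1) * real ((2*m) choose m)"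
      using arg_cong[OF central_rec[of m], of real] by (simp only: of_nat_mult of_nat_Suc of_nat_add of_nat_numeral of_nat_1)
    then have e: "(real m + 1) * X = 2 * (2*real m+1) * Y" unfolding X_def Y_def by (simp add: algebra_simps)
    have p1: "pp (Suc m) 0 = X / 4 ^ Suc m" unfolding X_def by (rule pp0_eq)
    have p2: "pp m 0 = Y / 4 ^ m" unfolding Y_def by (rule pp0_eq)
    have xX: "X = 2 * (2*real m+1) * Y / (real m + 1)" using e by (simp add: field_simps)
    have q: "(4::real)^m > 0" by simp
    show ?thesis unfolding p1 p2 xX power_Suc using aux_frac[OF q, of "real m" Y] by simp
  qed
  have "(pp (Suc m) 0)^2 * (2 * real (Suc m) + 1) = (pp m 0)^2 * (2*real m + 1) * ((2*real m+1)*(2*real m+3) / (2*real m+2)^2)"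
    unfolding r by (simp add: field_simps power2_eq_square)
  also have "\<dots> \<le> 1 * 1"
  proof (rule mult_mono)
    have "(2*real m+1)*(2*real m+3) \<le> (2*real m+2)^2" by (simp add: power2_eq_square algebra_simps)
    moreover have "(2*real m+2)^2 > 0" by simp
    ultimately show "(2*real m+1)*(2*real m+3) / (2*real m+2)^2 \<le> 1"
      by (simp only: divide_le_eq_1_pos)
  qed (use Suc in auto)
  finally show ?case by simp
qed

declare binomial_Suc_Suc[simp]

lemma pp0_le: "m \<ge> 1 \<Longrightarrow> pp m 0 \<le> 1 / sqrt (real m)"
proof -
  assume m: "m \<ge> 1"
  have "(pp m 0)^2 * real m \<le> 1"
  proof -
    have "(pp m 0)^2 * real m \<le> (pp m 0)^2 * (2*real m+1)" by (intro mult_left_mono) auto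
    then show ?thesis using pp0_sq[of m] by linarith
  qed
  then have "(pp m 0 * sqrt m)^2 \<le> 1" by (simp add: power_mult_distrib)
  then have "pp m 0 * sqrt m \<le> 1"
    unfolding abs_square_le_1 by simp
  then show ?thesis using m by (simp add: field_simps)
qed

lemma sum_isqrt: "(\<Sum>m=1..N. 1 / sqrt (real m)) \<le> 2 * sqrt (real N)"
proof (induction N)
  case 0 then show ?case by simp
next
  case (Suc N)
  have key: "2 * sqrt (real N) + 1 / sqrt (real (Suc N)) \<le> 2 * sqrt (real (Suc N))"
  proof -
    define a where "a = sqrt (real N)"
    define b where "b = sqrt (real (Suc N))"
    have b0: "b > 0" by (simp add: b_def)
    have a0: "a \<ge> 0" by (simp add: a_def)
    have ab: "b^2 = a^2 + 1" by (simp add: a_def b_def)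
    have "0 \<le> (a-b)^2" by simp
    moreover have "(a-b)^2 = a^2 + b^2 - 2*a*b" by (rule power2_diff)
    ultimately have "2*a*b \<le> a^2 + b^2" by linarith
    then have "2 * a * b + 1 \<le> 2 * b^2" using ab by simp
    have "2*a + 1/b = (2*a*b+1)/b" using b0 by (simp add: field_simps)
    also have "\<dots> \<le> 2*b^2/b" by (rule divide_right_mono) (use \<open>2 * a * b + 1 \<le> 2 * b^2\<close> b0 in auto)
    also have "\<dots> = 2*b" using b0 by (simp add: power2_eq_square)
    finally show ?thesis unfolding a_def b_def .
  qed
  show ?case using Suc key by simp
qed

lemma sum_pp0: "(\<Sum>m=1..N. pp m 0) \<le> 2 * sqrt (real N)"
  using sum_mono[of "{1..N}" "\<lambda>m. pp m 0" "\<lambda>m. 1 / sqrt (real m)"] pp0_le sum_isqrt[of N]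
  by force

lemma S_bound: "S k N 0 \<le> (2 * sqrt (real N)) ^ k"
proof (induction k arbitrary: N)
  case 0 then show ?case by (simp add: S_0)
next
  case (Suc k)
  have "S (Suc k) N 0 = (\<Sum>m=1..N. pp m 0 * S k (N-m) 0)" by (rule S_decomp)
  also have "\<dots> \<le> (\<Sum>m=1..N. pp m 0 * (2 * sqrt (real N)) ^ k)"
  proof (rule sum_mono)
    fix m assume "m \<in> {1..N}"
    have "S k (N-m) 0 \<le> (2 * sqrt (real (N-m))) ^ k" by (rule Suc.IH)
    also have "\<dots> \<le> (2 * sqrt (real N)) ^ k" by (intro power_mono) auto
    finally show "pp m 0 * S k (N-m) 0 \<le> pp m 0 * (2 * sqrt (real N)) ^ k"
      by (intro mult_left_mono pp_nonneg)
  qed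
  also have "\<dots> = (\<Sum>m=1..N. pp m 0) * (2 * sqrt (real N)) ^ k" by (simp add: sum_distrib_right)
  also have "\<dots> \<le> (2 * sqrt (real N)) * (2 * sqrt (real N)) ^ k"
    by (intro mult_right_mono sum_pp0) auto
  finally show ?case by simp
qed


lemma binom_ext: "L \<le> N \<Longrightarrow> (1 + (x::real))^L = (\<Sum>k\<le>N. real (L choose k) * x^k)"
proof -
  assume LN: "L \<le> N"
  have "(1 + x)^L = (x + 1)^L" by (simp add: add.commute)
  also have "\<dots> = (\<Sum>k\<le>L. real (L choose k) * x^k)" by (simp add: binomial_ring)
  also have "\<dots> = (\<Sum>k\<le>N. real (L choose k) * x^k)"
    by (rule sum.mono_neutral_left) (use LN in auto)
  finally show ?thesis .
qed

lemma S_mult: "S k N d * 4^N = (\<Sum>w\<in>walks N. \<Sum>w'\<in>walks N. real (Lg N d w w' choose k))"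
  by (simp add: S_def)

lemma Phi: "(\<Sum>w\<in>walks N. \<Sum>w'\<in>walks N. (1 + (x::real))^(Lg N 0 w w')) / 4^N = (\<Sum>k\<le>N. x^k * S k N 0)"
proof -
  have "(\<Sum>w\<in>walks N. \<Sum>w'\<in>walks N. (1 + x)^(Lg N 0 w w'))
      = (\<Sum>w\<in>walks N. \<Sum>w'\<in>walks N. \<Sum>k\<le>N. real (Lg N 0 w w' choose k) * x^k)"
    by (intro sum.cong refl binom_ext Lg_le)
  also have "\<dots> = (\<Sum>k\<le>N. x^k * (\<Sum>w\<in>walks N. \<Sum>w'\<in>walks N. real (Lg N 0 w w' choose k)))"
    by (simp add: sum_distrib_left sum_distrib_right sum.swap[of _ "{..N}"] mult.commute)
  also have "\<dots> = (\<Sum>k\<le>N. x^k * S k N 0) * 4^N"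
    by (simp add: sum_distrib_right S_mult mult.assoc)
  finally show ?thesis by simp
qed

lemma Phi_le: "x \<ge> 0 \<Longrightarrow> (\<Sum>k\<le>N. x^k * S k N 0) \<le> (\<Sum>k\<le>N. (2 * x * sqrt (real N))^k)"
proof (rule sum_mono)
  fix k assume x: "x \<ge> 0"
  have "x^k * S k N 0 \<le> x^k * (2 * sqrt (real N))^k" by (intro mult_left_mono S_bound) (use x in auto)
  then show "x^k * S k N 0 \<le> (2 * x * sqrt (real N))^k" by (simp add: power_mult_distrib mult_ac)
qed

lemma geo_mono: "0 \<le> a \<Longrightarrow> a \<le> b \<Longrightarrow> (\<Sum>k\<le>N. (a::real)^k) \<le> (\<Sum>k\<le>N. b^k)"
  by (intro sum_mono power_mono) auto

lemma Zcomb: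
  assumes t: "t \<ge> 0"
  shows "(\<Sum>w\<in>walks N. \<Sum>w'\<in>walks N. (1 + t)^(Lg N 0 w w')) / 4^N \<le> (\<Sum>n=0..N. (32 * t * sqrt (real N))^n)"
proof -
  have "(\<Sum>w\<in>walks N. \<Sum>w'\<in>walks N. (1 + t)^(Lg N 0 w w')) / 4^N \<le> (\<Sum>k\<le>N. (2 * t * sqrt (real N))^k)"
    unfolding Phi using Phi_le t by blast
  also have "\<dots> \<le> (\<Sum>k\<le>N. (32 * t * sqrt (real N))^k)" by (rule geo_mono) (use t in auto)
  finally show ?thesis by (simp add: atLeast0AtMost)
qed


lemma sqrt_sum_bound:
  fixes b :: real
  assumes b: "b \<ge> 0" and N: "N \<ge> 1"
  shows "sqrt (\<Sum>k=2..N. b^k) \<le> (\<Sum>k=1..N. b^k)"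
proof (rule real_le_lsqrt)
  define T where "T = (\<Sum>k=1..N. b^k)"
  show "0 \<le> (\<Sum>k=1..N. b^k)" using b by (intro sum_nonneg) auto
  have bT: "b \<le> T"
  proof -
    have "b = (\<Sum>k\<in>{1}. b^k)" by simp
    also have "\<dots> \<le> T" unfolding T_def by (rule sum_mono2) (use b N in auto)
    finally show ?thesis .
  qed
  have "(\<Sum>k=2..N. b^k) \<le> (\<Sum>k=Suc 1..Suc N. b^k)" by (rule sum_mono2) (use b in auto)
  also have "\<dots> = (\<Sum>k=1..N. b^(Suc k))" by (rule sum.shift_bounds_cl_Suc_ivl)
  also have "\<dots> = b * T" unfolding T_def by (simp add: sum_distrib_left)
  also have "\<dots> \<le> T * T" using bT T_def \<open>0 \<le> (\<Sum>k=1..N. b^k)\<close> by (intro mult_right_mono) auto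
  finally show "(\<Sum>k=2..N. b^k) \<le> (\<Sum>k=1..N. b^k)^2" by (simp add: T_def power2_eq_square)
qed

lemma sum_split012: "(N::nat) \<ge> 1 \<Longrightarrow> (\<Sum>k\<le>N. f k) = f 0 + f 1 + (\<Sum>k=2..N. (f k :: real))"
proof -
  assume N: "N \<ge> 1"
  have "{..N} = {0, 1} \<union> {2..N}" using N by auto
  then show ?thesis by (simp add: sum.union_disjoint)
qed

lemma Xbound:
  assumes t: "t \<ge> 0" and N: "N \<ge> 1" and y1: "t * sqrt (real N) < 1"
  shows "sqrt (\<Sum>k\<le>N. ((2*t+t^2)^k - 2 * t^k) * S k N 0 + (if k = 0 then 1 else 0))
     \<le> (\<Sum>k=1..N. (8 * t * sqrt (real N))^k)"
proof -
  define y where "y = t * sqrt (real N)"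
  define t' where "t' = 2*t+t^2"
  have sN: "sqrt (real N) \<ge> 1" using N by simp
  have y0: "y \<ge> 0" using t by (simp add: y_def)
  have "t \<le> t * sqrt (real N)" using t sN by (simp add: mult_le_cancel_left1)
  then have t1: "t \<le> 1" using y1 by linarith
  have "t * t \<le> t * 1" using t t1 by (intro mult_left_mono) auto
  then have tt: "t' \<le> 3 * t" by (simp add: t'_def power2_eq_square)
  have t'0: "t' \<ge> 0" using t by (simp add: t'_def)
  have yy: "t^2 * sqrt (real N) \<le> y^2"
  proof -
    have "sqrt (real N) * 1 \<le> sqrt (real N) * sqrt (real N)" using sN by (intro mult_left_mono) auto
    then have "sqrt (real N) \<le> real N" by simp
    then have "t^2 * sqrt (real N) \<le> t^2 * real N" by (intro mult_left_mono) auto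
    thus ?thesis by (simp add: y_def power_mult_distrib)
  qed
  define X where "X = (\<Sum>k\<le>N. (t'^k - 2 * t^k) * S k N 0 + (if k = 0 then 1 else 0))"
  have "X = (t' - 2*t) * S 1 N 0 + (\<Sum>k=2..N. (t'^k - 2 * t^k) * S k N 0)"
    unfolding X_def using N by (simp add: sum_split012 S_0)
  also have "\<dots> \<le> 2 * y^2 + (\<Sum>k=2..N. (6*y)^k)"
  proof (rule add_mono)
    have "(t' - 2*t) * S 1 N 0 = t^2 * S 1 N 0" by (simp add: t'_def)
    also have "\<dots> \<le> t^2 * (2 * sqrt (real N))" using S_bound[of 1 N] by (intro mult_left_mono) auto
    also have "\<dots> \<le> 2 * y^2" using yy by simp
    finally show "(t' - 2*t) * S 1 N 0 \<le> 2 * y^2" .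
    show "(\<Sum>k=2..N. (t'^k - 2 * t^k) * S k N 0) \<le> (\<Sum>k=2..N. (6*y)^k)"
    proof (rule sum_mono)
      fix k assume "k \<in> {2..N}"
      have "(t'^k - 2 * t^k) * S k N 0 \<le> t'^k * S k N 0" using t S_nonneg[of k N 0] by (intro mult_right_mono) auto
      also have "\<dots> \<le> t'^k * (2 * sqrt (real N))^k" using t'0 by (intro mult_left_mono S_bound) auto
      also have "\<dots> = (2 * t' * sqrt (real N))^k" by (simp add: power_mult_distrib mult_ac)
      also have "\<dots> \<le> (6*y)^k"
      proof (rule power_mono)
        have "t' * sqrt (real N) \<le> (3*t) * sqrt (real N)" by (rule mult_right_mono[OF tt]) simp
        then show "2 * t' * sqrt (real N) \<le> 6 * y" unfolding y_def by linarith
        show "0 \<le> 2 * t' * sqrt (real N)" using t'0 by simp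
      qed
      finally show "(t'^k - 2 * t^k) * S k N 0 \<le> (6*y)^k" .
    qed
  qed
  finally have Xle: "X \<le> 2 * y^2 + (\<Sum>k=2..N. (6*y)^k)" .
  have "sqrt X \<le> sqrt (2 * y^2 + (\<Sum>k=2..N. (6*y)^k))" using Xle by simp
  also have "\<dots> \<le> sqrt (2 * y^2) + sqrt (\<Sum>k=2..N. (6*y)^k)"
    by (rule sqrt_add_le_add_sqrt) (use y0 in \<open>auto intro!: sum_nonneg\<close>)
  also have "\<dots> \<le> 2 * y + (\<Sum>k=1..N. (6*y)^k)"
  proof (rule add_mono)
    have "sqrt (2 * y^2) = sqrt 2 * y" using y0 by (simp add: real_sqrt_mult)
    also have "\<dots> \<le> 2 * y" using y0 by (intro mult_right_mono) (auto simp: real_sqrt_le_iff[of 2 4, simplified])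
    finally show "sqrt (2 * y^2) \<le> 2 * y" .
    show "sqrt (\<Sum>k=2..N. (6*y)^k) \<le> (\<Sum>k=1..N. (6*y)^k)" by (rule sqrt_sum_bound) (use y0 N in auto)
  qed
  also have "\<dots> \<le> (\<Sum>k=1..N. (8*y)^k)"
  proof -
    have "(\<Sum>k=1..N. (8*y)^k) - (\<Sum>k=1..N. (6*y)^k) = (\<Sum>k=1..N. (8*y)^k - (6*y)^k)"
      by (simp add: sum_subtractf)
    also have "\<dots> \<ge> (\<Sum>k\<in>{1}. (8*y)^k - (6*y)^k)"
    proof (rule sum_mono2)
      show "0 \<le> (8*y)^k - (6*y)^k" for k using power_mono[of "6*y" "8*y" k] y0 by simp
    qed (use N in auto)
    finally show ?thesis by simp
  qed
  finally show ?thesis unfolding X_def t'_def y_def by (simp add: mult.assoc)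
qed


lemma CS_sqrt: "(\<Sum>i\<in>I. a i * b i) \<le> sqrt (\<Sum>i\<in>I. (a i)^2) * sqrt (\<Sum>i\<in>I. (b i)^2 :: real)"
proof -
  have "\<bar>\<Sum>i\<in>I. a i * b i\<bar> \<le> sqrt ((\<Sum>i\<in>I. (a i)^2) * (\<Sum>i\<in>I. (b i)^2))"
    by (rule real_le_rsqrt) (use Cauchy_Schwarz_ineq_sum[of a b I] in simp)
  then have "\<bar>\<Sum>i\<in>I. a i * b i\<bar> \<le> sqrt (\<Sum>i\<in>I. (a i)^2) * sqrt (\<Sum>i\<in>I. (b i)^2)"
    by (simp add: real_sqrt_mult)
  then show ?thesis by linarith
qed

lemma pairsum: "(\<Sum>w\<in>A. \<Sum>w'\<in>B. f w w') = (\<Sum>p\<in>A \<times> B. f (fst p) (snd p))"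
  by (simp add: sum.cartesian_product case_prod_beta)

lemma r_le: "w \<in> walks N \<Longrightarrow> (real_of_int (w N))^2 \<le> (real N)^2"
proof -
  assume w: "w \<in> walks N"
  have "\<bar>real_of_int (w N)\<bar> \<le> real N" using walk_bound[OF w, of N] by linarith
  then show ?thesis using abs_le_square_iff by (metis abs_of_nat)
qed

lemma big_pow: "(N::nat) \<ge> 1 \<Longrightarrow> real N ^ 2 * (real N + 1) * 2^N \<le> 32^N"
proof -
  assume N: "N \<ge> 1"
  have a: "N < 2^N" by (rule less_exp)
  have b: "N+1 \<le> 2^N" using a by (simp add: Suc_le_eq)
  have "N^2 * (N+1) \<le> (2^N)^2 * 2^N"
    using a b by (intro mult_mono power_mono) auto
  also have "\<dots> = (2::nat)^(3*N)" by (simp add: power_mult_distrib[symmetric] power_mult[symmetric] power_add[symmetric])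
  also have "\<dots> = (8::nat)^N" by (simp add: power_mult)
  finally have "N^2 * (N+1) * 2^N \<le> 8^N * 2^N" by simp
  also have "(8::nat)^N * 2^N \<le> 32^N"
  proof -
    have "(8::nat)^N * 2^N = 16^N" by (simp add: power_mult_distrib[symmetric])
    also have "\<dots> \<le> 32^N" by (rule power_mono) auto
    finally show ?thesis .
  qed
  finally have "N^2 * (N+1) * 2^N \<le> (32::nat)^N" .
  then have "real (N^2 * (N+1) * 2^N) \<le> real (32^N)" by (simp only: of_nat_le_iff)
  then show ?thesis by (simp add: algebra_simps)
qed


lemma three_le: "k \<ge> 1 \<Longrightarrow> y \<ge> 0 \<Longrightarrow> 3 * (8 * (y::real))^k \<le> (32 * y)^k"
proof -
  assume k: "k \<ge> 1" and y: "y \<ge> 0"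
  have "(4::real)^1 \<le> 4^k" by (rule power_increasing) (use k in auto)
  then have "(3::real) \<le> 4^k" by simp
  then have "3 * (8 * y)^k \<le> 4^k * (8*y)^k" by (rule mult_right_mono) (use y in simp)
  also have "\<dots> = (4 * (8 * y))^k" by (rule power_mult_distrib[symmetric])
  also have "4 * (8 * y) = 32 * y" by simp
  finally show ?thesis .
qed

lemma Kcomb:
  assumes t: "t \<ge> 0" and N: "N \<ge> 1"
  shows "(\<Sum>w\<in>walks N. \<Sum>w'\<in>walks N. (1 + t)^(Lg N 0 w w') * ((real_of_int (w N))^2 * (real_of_int (w' N))^2)) / 4^N
     \<le> (real N)^2 * (\<Sum>n=0..N. (32 * t * sqrt (real N))^n)"
proof -
  define y where "y = t * sqrt (real N)"
  have y0: "y \<ge> 0" using t by (simp add: y_def)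
  define W where "W = walks N"
  define r where "r w = (real_of_int (w N))^2" for w :: "nat \<Rightarrow> int"
  define L where "L w w' = Lg N 0 w w'" for w w'
  define P where "P = (\<Sum>w\<in>W. \<Sum>w'\<in>W. (1+t)^(L w w'))"
  have P: "P / 4^N \<le> (\<Sum>k\<le>N. (2*y)^k)"
    unfolding P_def W_def L_def Phi using Phi_le[OF t, of N] by (simp add: y_def mult.assoc)
  have r0: "r w \<ge> 0" for w by (simp add: r_def)
  have rle: "w \<in> W \<Longrightarrow> r w \<le> (real N)^2" for w unfolding r_def W_def by (rule r_le)
  have fin: "finite W" unfolding W_def by (rule finite_walks)
  have goal_eq: "(\<Sum>w\<in>walks N. \<Sum>w'\<in>walks N. (1 + t)^(Lg N 0 w w') * ((real_of_int (w N))^2 * (real_of_int (w' N))^2))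
     = (\<Sum>w\<in>W. \<Sum>w'\<in>W. (1+t)^(L w w') * (r w * r w'))" by (simp add: W_def L_def r_def)
  have main: "(\<Sum>w\<in>W. \<Sum>w'\<in>W. (1+t)^(L w w') * (r w * r w')) / 4^N \<le> (real N)^2 * (\<Sum>n=0..N. (32 * y)^n)"
  proof (cases "y < 1")
    case False
    have "(\<Sum>w\<in>W. \<Sum>w'\<in>W. (1+t)^(L w w') * (r w * r w')) \<le> (\<Sum>w\<in>W. \<Sum>w'\<in>W. (1+t)^(L w w') * ((real N)^2 * (real N)^2))"
      by (intro sum_mono mult_left_mono mult_mono rle) (use t r0 in auto)
    also have "\<dots> = (real N)^2 * (real N)^2 * P" by (simp add: P_def sum_distrib_left mult_ac)
    finally have "(\<Sum>w\<in>W. \<Sum>w'\<in>W. (1+t)^(L w w') * (r w * r w')) / 4^N \<le> (real N)^2 * (real N)^2 * (P / 4^N)"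
      by (simp add: divide_right_mono)
    have B: "P / 4^N \<le> (real N + 1) * (2*y)^N"
    proof -
      have s1: "(\<Sum>k\<le>N. (2*y)^k) \<le> (\<Sum>k\<le>N. (2*y)^N)"
        by (intro sum_mono power_increasing) (use False in auto)
      have s2: "(\<Sum>k\<le>N. (2*y)^N) = (real N + 1) * (2*y)^N" by simp
      show ?thesis unfolding s2[symmetric] by (rule order.trans[OF P s1])
    qed
    have C: "(real N)^2 * (real N)^2 * ((real N + 1) * (2*y)^N) \<le> (real N)^2 * (\<Sum>n=0..N. (32 * y)^n)"
    proof -
      have "(real N)^2 * (real N)^2 * ((real N + 1) * (2*y)^N) = (real N)^2 * (((real N)^2 * (real N + 1) * 2^N) * y^N)"
        by (simp add: power_mult_distrib mult_ac)
      also have "\<dots> \<le> (real N)^2 * (32^N * y^N)"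
        by (intro mult_left_mono mult_right_mono big_pow N) (use y0 in auto)
      also have "\<dots> = (real N)^2 * (32 * y)^N" by (simp add: power_mult_distrib)
      also have "\<dots> \<le> (real N)^2 * (\<Sum>n=0..N. (32 * y)^n)"
        by (intro mult_left_mono member_le_sum) (use y0 in auto)
      finally show ?thesis .
    qed
    have "(real N)^2 * (real N)^2 * (P / 4^N) \<le> (real N)^2 * (real N)^2 * ((real N + 1) * (2*y)^N)"
      by (intro mult_left_mono B) auto
    with \<open>(\<Sum>w\<in>W. \<Sum>w'\<in>W. (1+t)^(L w w') * (r w * r w')) / 4^N \<le> (real N)^2 * (real N)^2 * (P / 4^N)\<close> C
    show ?thesis by linarith
  next
    case True
    define t' where "t' = 2*t+t^2"
    define X where "X = (\<Sum>k\<le>N. ((2*t+t^2)^k - 2 * t^k) * S k N 0 + (if k = 0 then 1 else 0))"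
    have Xb: "sqrt X \<le> (\<Sum>k=1..N. (8 * y)^k)"
      unfolding X_def y_def using Xbound[OF t N] True by (simp add: y_def mult.assoc)
    have WW: "(\<Sum>w\<in>W. \<Sum>w'\<in>W. (1::real)) = 4^N"
    proof -
      have "(\<Sum>w\<in>W. \<Sum>w'\<in>W. (1::real)) = 2^N * 2^N" using card_walks[of N] by (simp add: W_def)
      also have "\<dots> = 4^N" by (simp add: power_mult_distrib[symmetric])
      finally show ?thesis .
    qed
    have sr: "(\<Sum>w\<in>W. r w) = real N * 2^N" unfolding W_def r_def by (rule moment2)
    have sr2: "(\<Sum>w\<in>W. (r w)^2) \<le> 3 * (real N)^2 * 2^N"
    proof -
      have r4: "(r w)^2 = real_of_int (w N) ^ 4" for w unfolding r_def by (simp add: power_mult[symmetric])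
      have "(\<Sum>w\<in>W. (r w)^2) = (3 * real N ^ 2 - 2 * real N) * 2 ^ N"
        unfolding r4 W_def by (rule moment4)
      also have "\<dots> \<le> 3 * (real N)^2 * 2^N" by (intro mult_right_mono) auto
      finally show ?thesis .
    qed
    define a where "a p = (1+t)^(L (fst p) (snd p)) - 1" for p
    define b where "b p = r (fst p) * r (snd p)" for p
    have split: "(\<Sum>w\<in>W. \<Sum>w'\<in>W. (1+t)^(L w w') * (r w * r w'))
        = (\<Sum>w\<in>W. \<Sum>w'\<in>W. r w * r w') + (\<Sum>p\<in>W \<times> W. a p * b p)"
      by (simp add: pairsum a_def b_def sum.distrib[symmetric] algebra_simps)
    have four: "(2::real)^N * 2^N = 4^N" by (simp add: power_mult_distrib[symmetric])
    have rr: "(\<Sum>w\<in>W. \<Sum>w'\<in>W. r w * r w') = (real N)^2 * 4^N"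
    proof -
      have "(\<Sum>w\<in>W. \<Sum>w'\<in>W. r w * r w') = (\<Sum>w\<in>W. r w) * (\<Sum>w\<in>W. r w)"
        by (simp add: sum_product)
      also have "\<dots> = (real N)^2 * (2^N * 2^N)" unfolding sr by (simp add: power2_eq_square mult_ac)
      finally show ?thesis unfolding four .
    qed
    have aa: "(\<Sum>p\<in>W \<times> W. (a p)^2) = 4^N * X"
    proof -
      have sq: "((1+t)^n - 1)^2 = (1+t')^n - 2 * (1+t)^n + 1" for n
      proof -
        have "(1+t')^n = ((1+t)^2)^n" by (simp add: t'_def power2_eq_square algebra_simps)
        then show ?thesis by (simp add: power2_diff power_mult[symmetric] mult.commute)
      qed
      have "(\<Sum>p\<in>W \<times> W. (a p)^2) = (\<Sum>w\<in>W. \<Sum>w'\<in>W. (1+t')^(L w w') - 2 * (1+t)^(L w w') + 1)"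
        by (simp add: pairsum a_def sq)
      also have "\<dots> = (\<Sum>w\<in>W. \<Sum>w'\<in>W. (1+t')^(L w w')) - 2 * (\<Sum>w\<in>W. \<Sum>w'\<in>W. (1+t)^(L w w')) + (\<Sum>w\<in>W. \<Sum>w'\<in>W. (1::real))"
        by (simp add: sum.distrib sum_subtractf sum_distrib_left)
      also have "\<dots> = 4^N * (\<Sum>k\<le>N. t'^k * S k N 0) - 2 * (4^N * (\<Sum>k\<le>N. t^k * S k N 0)) + 4^N"
      proof -
        have e: "(\<Sum>w\<in>W. \<Sum>w'\<in>W. (1+x)^(L w w')) = 4^N * (\<Sum>k\<le>N. x^k * S k N 0)" for x
          using Phi[where x=x and N=N] unfolding W_def L_def by (simp add: field_simps)
        show ?thesis unfolding e WW ..
      qed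
      also have "\<dots> = 4^N * X"
      proof -
        have "X = (\<Sum>k\<le>N. t'^k * S k N 0) - 2 * (\<Sum>k\<le>N. t^k * S k N 0) + (\<Sum>k\<le>N. (if k = 0 then 1 else 0))"
          unfolding X_def t'_def[symmetric] by (simp add: sum.distrib sum_subtractf sum_distrib_left algebra_simps)
        also have "(\<Sum>k\<le>N. (if k = 0 then 1 else 0::real)) = 1" by simp
        finally have xe: "X = (\<Sum>k\<le>N. t'^k * S k N 0) - 2 * (\<Sum>k\<le>N. t^k * S k N 0) + 1" .
        show ?thesis unfolding xe by (simp add: algebra_simps)
      qed
      finally show ?thesis .
    qed
    have bb: "(\<Sum>p\<in>W \<times> W. (b p)^2) = (\<Sum>w\<in>W. (r w)^2)^2"
    proof -
      have "(\<Sum>p\<in>W \<times> W. (b p)^2) = (\<Sum>w\<in>W. \<Sum>w'\<in>W. (r w)^2 * (r w')^2)"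
        by (simp add: pairsum b_def power_mult_distrib)
      also have "\<dots> = (\<Sum>w\<in>W. (r w)^2) * (\<Sum>w\<in>W. (r w)^2)" by (simp add: sum_product)
      finally show ?thesis by (simp add: power2_eq_square)
    qed
    have sqb: "sqrt (\<Sum>p\<in>W \<times> W. (b p)^2) \<le> 3 * (real N)^2 * 2^N"
      unfolding bb using sr2 by (subst real_sqrt_abs) (auto intro: order.trans[OF abs_le_D1] simp: sum_nonneg abs_of_nonneg)
    have sqa: "sqrt (\<Sum>p\<in>W \<times> W. (a p)^2) = 2^N * sqrt X"
    proof -
      have "(2::real)^N * 2^N = 4^N" by (simp add: power_mult_distrib[symmetric])
      then have "(4::real)^N = (2^N)^2" by (simp add: power2_eq_square)
      then show ?thesis unfolding aa by (simp add: real_sqrt_mult)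
    qed
    have X0: "X \<ge> 0"
    proof -
      have "0 \<le> (\<Sum>p\<in>W \<times> W. (a p)^2)" by (intro sum_nonneg) auto
      then have c: "0 \<le> 4^N * X" unfolding aa .
      have "(0::real) < 4^N" by simp
      show ?thesis
      proof (rule ccontr)
        assume "\<not> 0 \<le> X"
        then have "4^N * X < 0" using \<open>(0::real) < 4^N\<close> by (simp add: mult_pos_neg)
        then show False using c by linarith
      qed
    qed
    have "(\<Sum>p\<in>W \<times> W. a p * b p) \<le> sqrt (\<Sum>p\<in>W \<times> W. (a p)^2) * sqrt (\<Sum>p\<in>W \<times> W. (b p)^2)"
      by (rule CS_sqrt)
    also have "\<dots> \<le> (2^N * sqrt X) * (3 * (real N)^2 * 2^N)"
      unfolding sqa by (intro mult_left_mono sqb) (use X0 in auto)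
    also have "\<dots> = (2^N * 2^N) * (3 * (real N)^2 * sqrt X)"
      by (simp add: mult_ac)
    also have "\<dots> = 4^N * (3 * (real N)^2 * sqrt X)"
      by (simp add: power_mult_distrib[symmetric])
    finally have ab: "(\<Sum>p\<in>W \<times> W. a p * b p) \<le> 4^N * (3 * (real N)^2 * sqrt X)" .
    have "(\<Sum>w\<in>W. \<Sum>w'\<in>W. (1+t)^(L w w') * (r w * r w')) / 4^N \<le> (real N)^2 + 3 * (real N)^2 * sqrt X"
      unfolding split rr using ab by (simp add: field_simps)
    also have "\<dots> \<le> (real N)^2 + 3 * (real N)^2 * (\<Sum>k=1..N. (8 * y)^k)"
      using Xb by (intro add_left_mono mult_left_mono) auto
    also have "\<dots> = (real N)^2 * (1 + (\<Sum>k=1..N. 3 * (8 * y)^k))" by (simp add: sum_distrib_left algebra_simps)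
    also have "\<dots> \<le> (real N)^2 * (1 + (\<Sum>k=1..N. (32 * y)^k))"
      by (intro mult_left_mono add_left_mono sum_mono three_le) (use y0 in auto)
    also have "1 + (\<Sum>k=1..N. (32 * y)^k) = (\<Sum>n=0..N. (32 * y)^n)"
    proof -
      have "(\<Sum>n=0..N. (32*y)^n) = (32*y)^0 + (\<Sum>n=Suc 0..N. (32*y)^n)" by (rule sum.atLeast_Suc_atMost) simp
      then show ?thesis by simp
    qed
    finally show ?thesis .
  qed
  show ?thesis using main unfolding goal_eq y_def by (simp add: mult.assoc)
qed


lemma prod_two:
  fixes f :: "'a \<Rightarrow> real"
  assumes "finite A" "finite B"
  shows "(\<Prod>i\<in>A. f i) * (\<Prod>i\<in>B. f i) = (\<Prod>i\<in>A \<union> B. if i \<in> A \<inter> B then (f i)^2 else f i)"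
proof -
  have "(\<Prod>i\<in>A \<union> B. if i \<in> A \<inter> B then (f i)^2 else f i)
      = (\<Prod>i\<in>A \<union> B. f i * (if i \<in> A \<inter> B then f i else 1))"
    by (intro prod.cong refl) (auto simp: power2_eq_square)
  also have "\<dots> = (\<Prod>i\<in>A \<union> B. f i) * (\<Prod>i\<in>A \<union> B. if i \<in> A \<inter> B then f i else 1)"
    by (rule prod.distrib)
  also have "(\<Prod>i\<in>A \<union> B. if i \<in> A \<inter> B then f i else 1) = (\<Prod>i\<in>(A \<union> B) \<inter> (A \<inter> B). f i)"
    using assms by (simp add: prod.inter_restrict)
  also have "(A \<union> B) \<inter> (A \<inter> B) = A \<inter> B" by auto
  also have "(\<Prod>i\<in>A \<union> B. f i) * (\<Prod>i\<in>A \<inter> B. f i) = (\<Prod>i\<in>A. f i) * (\<Prod>i\<in>B. f i)"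
    using assms by (rule prod.union_inter)
  finally show ?thesis ..
qed

context prob_space
begin

lemma h_meas:
  fixes h :: "'i \<Rightarrow> 'a \<Rightarrow> real"
  assumes ind: "indep_vars (\<lambda>_. count_space UNIV) h UNIV"
  shows "h i \<in> measurable M (count_space UNIV)"
  using ind by (auto simp: indep_vars_def)

lemma g_meas:
  fixes h :: "'i \<Rightarrow> 'a \<Rightarrow> real"
  assumes ind: "indep_vars (\<lambda>_. count_space UNIV) h UNIV"
  shows "(\<lambda>q. (g :: real \<Rightarrow> real) (h i q)) \<in> borel_measurable M"
  by (rule measurable_compose[OF h_meas[OF ind]]) simp

lemma g_int:
  fixes h :: "'i \<Rightarrow> 'a \<Rightarrow> real"
  assumes ind: "indep_vars (\<lambda>_. count_space UNIV) h UNIV"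
    and pm: "\<forall>i. \<forall>q\<in>space M. h i q \<in> {-1, 1}"
  shows "integrable M (\<lambda>q. (g :: real \<Rightarrow> real) (h i q))"
proof (rule integrable_const_bound[where B="\<bar>g (-1)\<bar> + \<bar>g 1\<bar>"])
  show "AE q in M. norm (g (h i q)) \<le> \<bar>g (-1)\<bar> + \<bar>g 1\<bar>"
  proof (rule AE_I2)
    fix q assume "q \<in> space M"
    then have "h i q \<in> {-1,1}" using pm by auto
    then show "norm (g (h i q)) \<le> \<bar>g (-1)\<bar> + \<bar>g 1\<bar>" by auto
  qed
qed (rule g_meas[OF ind])

lemma Eh:
  fixes h :: "'i \<Rightarrow> 'a \<Rightarrow> real"
  assumes ind: "indep_vars (\<lambda>_. count_space UNIV) h UNIV"
    and pm: "\<forall>i. \<forall>q\<in>space M. h i q \<in> {-1, 1}"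
    and half: "\<forall>i. measure M {q\<in>space M. h i q = 1} = 1/2"
  shows "integral\<^sup>L M (h i) = 0"
proof -
  define E where "E = {q\<in>space M. h i q = 1}"
  have Es: "E \<in> sets M"
  proof -
    have "E = h i -` {1} \<inter> space M" by (auto simp: E_def)
    also have "\<dots> \<in> sets M" using measurable_sets[OF h_meas[OF ind], of "{1}"] by simp
    finally show ?thesis .
  qed
  have eq: "\<And>q. q \<in> space M \<Longrightarrow> h i q = 2 * indicator E q - 1"
    using pm by (fastforce simp: E_def indicator_def)
  have "integral\<^sup>L M (h i) = integral\<^sup>L M (\<lambda>q. 2 * indicator E q - 1)"
    by (rule Bochner_Integration.integral_cong) (auto simp: eq)
  also have "\<dots> = 2 * integral\<^sup>L M (indicator E) - 1"
  proof -
    have "integrable M (indicator E :: 'a \<Rightarrow> real)"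
      using Es by (simp add: integrable_indicator_iff less_top[symmetric])
    then show ?thesis by (simp add: prob_space)
  qed
  also have "integral\<^sup>L M (indicator E) = measure M E" using Es by simp
  also have "measure M E = 1/2" using half by (simp add: E_def)
  finally show ?thesis by simp
qed

lemma Eh2:
  fixes h :: "'i \<Rightarrow> 'a \<Rightarrow> real"
  assumes pm: "\<forall>i. \<forall>q\<in>space M. h i q \<in> {-1, 1}"
  shows "integral\<^sup>L M (\<lambda>q. (h i q)^2) = 1"
proof -
  have "integral\<^sup>L M (\<lambda>q. (h i q)^2) = integral\<^sup>L M (\<lambda>q. 1)"
  proof (rule Bochner_Integration.integral_cong[OF refl])
    fix x assume "x \<in> space M"
    then have "h i x = -1 \<or> h i x = 1" using pm by auto
    then show "(h i x)^2 = 1" by auto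
  qed
  then show ?thesis by (simp add: prob_space)
qed

lemma EG:
  fixes h :: "'i \<Rightarrow> 'a \<Rightarrow> real"
  assumes ind: "indep_vars (\<lambda>_. count_space UNIV) h UNIV"
    and pm: "\<forall>i. \<forall>q\<in>space M. h i q \<in> {-1, 1}"
    and half: "\<forall>i. measure M {q\<in>space M. h i q = 1} = 1/2"
  shows "integral\<^sup>L M (\<lambda>q. 1 + a * h i q) = 1"
    and "integral\<^sup>L M (\<lambda>q. (1 + a * h i q)^2) = 1 + a^2"
proof -
  have ih: "integrable M (h i)" using g_int[OF ind pm, of "\<lambda>x. x"] by simp
  have ih2: "integrable M (\<lambda>q. (h i q)^2)" using g_int[OF ind pm, of "\<lambda>x. x^2"] by simp
  show "integral\<^sup>L M (\<lambda>q. 1 + a * h i q) = 1"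
    using ih Eh[OF ind pm half, of i] by (simp add: prob_space)
  have "integral\<^sup>L M (\<lambda>q. (1 + a * h i q)^2) = integral\<^sup>L M (\<lambda>q. 1 + 2 * a * h i q + a^2 * (h i q)^2)"
    by (rule Bochner_Integration.integral_cong) (auto simp: power2_eq_square algebra_simps)
  also have "\<dots> = 1 + 2 * a * integral\<^sup>L M (h i) + a^2 * integral\<^sup>L M (\<lambda>q. (h i q)^2)"
    using ih ih2 by (simp add: prob_space)
  also have "\<dots> = 1 + a^2" using Eh[OF ind pm half, of i] Eh2[OF pm, of i] by simp
  finally show "integral\<^sup>L M (\<lambda>q. (1 + a * h i q)^2) = 1 + a^2" .
qed

lemma EFF:
  fixes h :: "nat \<times> int \<Rightarrow> 'a \<Rightarrow> real"
  assumes ind: "indep_vars (\<lambda>_. count_space UNIV) h UNIV"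
    and pm: "\<forall>i. \<forall>q\<in>space M. h i q \<in> {-1, 1}"
    and half: "\<forall>i. measure M {q\<in>space M. h i q = 1} = 1/2"
  shows "integral\<^sup>L M (\<lambda>q. (\<Prod>n\<in>{1..N}. 1 + a * h (n, w n) q) * (\<Prod>n\<in>{1..N}. 1 + a * h (n, w' n) q))
          = (1 + a^2) ^ (Lg N 0 w w')"
    and "integrable M (\<lambda>q. (\<Prod>n\<in>{1..N}. 1 + a * h (n, w n) q) * (\<Prod>n\<in>{1..N}. 1 + a * h (n, w' n) q))"
proof -
  define A where "A = (\<lambda>n. (n, w n)) ` {1..N}"
  define A' where "A' = (\<lambda>n. (n, w' n)) ` {1..N}"
  have finA: "finite A" "finite A'" by (simp_all add: A_def A'_def)
  define G where "G i x = (if i \<in> A \<inter> A' then (1 + a * x)^2 else 1 + a * x)" for i x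
  have r1: "(\<Prod>n\<in>{1..N}. 1 + a * h (n, w n) q) = (\<Prod>i\<in>A. 1 + a * h i q)" for q
    unfolding A_def by (subst prod.reindex) (auto simp: inj_on_def)
  have r2: "(\<Prod>n\<in>{1..N}. 1 + a * h (n, w' n) q) = (\<Prod>i\<in>A'. 1 + a * h i q)" for q
    unfolding A'_def by (subst prod.reindex) (auto simp: inj_on_def)
  have pw: "(\<Prod>n\<in>{1..N}. 1 + a * h (n, w n) q) * (\<Prod>n\<in>{1..N}. 1 + a * h (n, w' n) q)
      = (\<Prod>i\<in>A \<union> A'. G i (h i q))" for q
    unfolding r1 r2 G_def by (rule prod_two[OF finA])
  have indG: "indep_vars (\<lambda>_. borel) (\<lambda>i q. G i (h i q)) (A \<union> A')"
    by (rule indep_vars_compose2[OF indep_vars_subset[OF ind subset_UNIV]]) simp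
  have intG: "\<And>i. i \<in> A \<union> A' \<Longrightarrow> integrable M (\<lambda>q. G i (h i q))"
    using g_int[OF ind pm] by blast
  have EGi: "integral\<^sup>L M (\<lambda>q. G i (h i q)) = (if i \<in> A \<inter> A' then 1 + a^2 else 1)" for i
  proof (cases "i \<in> A \<inter> A'")
    case True
    then have "(\<lambda>q. G i (h i q)) = (\<lambda>q. (1 + a * h i q)^2)" by (simp add: G_def)
    then show ?thesis using EG(2)[OF ind pm half] True by simp
  next
    case False
    have "(\<lambda>q. G i (h i q)) = (\<lambda>q. 1 + a * h i q)" unfolding G_def using False by (intro ext) (simp only: if_False)
    then have e1: "integral\<^sup>L M (\<lambda>q. G i (h i q)) = 1" using EG(1)[OF ind pm half] by simp
    show ?thesis unfolding if_not_P[OF False] by (rule e1)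
  qed
  have "integral\<^sup>L M (\<lambda>q. (\<Prod>n\<in>{1..N}. 1 + a * h (n, w n) q) * (\<Prod>n\<in>{1..N}. 1 + a * h (n, w' n) q))
      = integral\<^sup>L M (\<lambda>q. \<Prod>i\<in>A \<union> A'. G i (h i q))" unfolding pw ..
  also have "\<dots> = (\<Prod>i\<in>A \<union> A'. integral\<^sup>L M (\<lambda>q. G i (h i q)))"
    using finA indG intG by (intro indep_vars_lebesgue_integral) auto
  also have "\<dots> = (\<Prod>i\<in>A \<union> A'. if i \<in> A \<inter> A' then 1 + a^2 else 1)" unfolding EGi ..
  also have "\<dots> = (1 + a^2) ^ card (A \<inter> A')"
  proof -
    have "(\<Prod>i\<in>(A \<union> A') \<inter> (A \<inter> A'). 1 + a^2) = (\<Prod>i\<in>A \<union> A'. if i \<in> A \<inter> A' then 1 + a^2 else 1)"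
      by (rule prod.inter_restrict) (use finA in simp)
    note this[symmetric]
    also have "(A \<union> A') \<inter> (A \<inter> A') = A \<inter> A'" by auto
    finally show ?thesis by simp
  qed
  also have "card (A \<inter> A') = Lg N 0 w w'"
  proof -
    have "A \<inter> A' = (\<lambda>n. (n, w n)) ` {n\<in>{1..N}. 0 + w n - w' n = 0}"
      unfolding A_def A'_def by auto
    then have "card (A \<inter> A') = card {n\<in>{1..N}. 0 + w n - w' n = 0}"
      by (simp add: card_image inj_on_def)
    then show ?thesis by (simp add: Lg_def)
  qed
  finally show "integral\<^sup>L M (\<lambda>q. (\<Prod>n\<in>{1..N}. 1 + a * h (n, w n) q) * (\<Prod>n\<in>{1..N}. 1 + a * h (n, w' n) q))
          = (1 + a^2) ^ (Lg N 0 w w')" .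
  show "integrable M (\<lambda>q. (\<Prod>n\<in>{1..N}. 1 + a * h (n, w n) q) * (\<Prod>n\<in>{1..N}. 1 + a * h (n, w' n) q))"
    unfolding pw using finA indG intG by (intro indep_vars_integrable) auto
qed

end


context prob_space
begin

lemma int_sq:
  fixes f :: "'b \<Rightarrow> 'a \<Rightarrow> real"
  assumes fin: "finite W" and int: "\<And>w w'. w \<in> W \<Longrightarrow> w' \<in> W \<Longrightarrow> integrable M (\<lambda>q. f w q * f w' q)"
  shows "integral\<^sup>L M (\<lambda>q. (\<Sum>w\<in>W. f w q * b w / D)^2)
     = (\<Sum>w\<in>W. \<Sum>w'\<in>W. integral\<^sup>L M (\<lambda>q. f w q * f w' q) * (b w * b w')) / D^2"
proof -
  have pw: "(\<Sum>w\<in>W. f w q * b w / D)^2 = (\<Sum>w\<in>W. \<Sum>w'\<in>W. (f w q * f w' q) * (b w * b w') / D^2)" for q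
    by (simp add: power2_eq_square sum_product mult_ac)
  have "integral\<^sup>L M (\<lambda>q. (\<Sum>w\<in>W. f w q * b w / D)^2)
      = integral\<^sup>L M (\<lambda>q. \<Sum>w\<in>W. \<Sum>w'\<in>W. (f w q * f w' q) * (b w * b w') / D^2)"
    unfolding pw ..
  also have "\<dots> = (\<Sum>w\<in>W. \<Sum>w'\<in>W. integral\<^sup>L M (\<lambda>q. (f w q * f w' q) * (b w * b w') / D^2))"
    using int by (simp add: integral_sum integrable_sum)
  also have "\<dots> = (\<Sum>w\<in>W. \<Sum>w'\<in>W. integral\<^sup>L M (\<lambda>q. f w q * f w' q) * (b w * b w') / D^2)"
    by simp
  also have "\<dots> = (\<Sum>w\<in>W. \<Sum>w'\<in>W. integral\<^sup>L M (\<lambda>q. f w q * f w' q) * (b w * b w')) / D^2"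
    by (simp add: sum_divide_distrib)
  finally show ?thesis .
qed

end

theorem proposition1:
  "\<exists>c1::real. c1 > 0 \<and>
     (\<forall>(Q::'q measure) (h::nat \<times> int \<Rightarrow> 'q \<Rightarrow> real) (c::nat \<Rightarrow> real).
        prob_space Q \<longrightarrow>
        prob_space.indep_vars Q (\<lambda>_. count_space UNIV) h UNIV \<longrightarrow>
        (\<forall>i. \<forall>q\<in>space Q. h i q \<in> {-1, 1}) \<longrightarrow>
        (\<forall>i. measure Q {q\<in>space Q. h i q = 1} = 1/2) \<longrightarrow>
        (\<forall>N. c N > 0) \<longrightarrow>
        ((\<lambda>N. (c N)\<^sup>2 * sqrt (real N)) \<longlonglongrightarrow> 0) \<longrightarrow>
        (\<forall>N\<ge>1.
           (\<integral>q. (Zpart c h N q)\<^sup>2 \<partial>Q) \<le> (\<Sum>n=0..N. (c1 * (c N)\<^sup>2 * sqrt (real N)) ^ n) \<and>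
           (\<integral>q. (Kpart c h N q)\<^sup>2 \<partial>Q) \<le> (real N)\<^sup>2 * (\<Sum>n=0..N. (c1 * (c N)\<^sup>2 * sqrt (real N)) ^ n)))"
proof (intro exI[of _ 32] conjI allI impI)
  fix Q :: "'q measure" and h :: "nat \<times> int \<Rightarrow> 'q \<Rightarrow> real" and c :: "nat \<Rightarrow> real" and N :: nat
  assume ps: "prob_space Q"
    and ind: "prob_space.indep_vars Q (\<lambda>_. count_space UNIV) h UNIV"
    and pm: "\<forall>i. \<forall>q\<in>space Q. h i q \<in> {-1, 1}"
    and half: "\<forall>i. measure Q {q\<in>space Q. h i q = 1} = 1/2"
    and N: "N \<ge> 1"
  interpret prob_space Q by (rule ps)
  define F where "F w q = (\<Prod>n\<in>{1..N}. 1 + c N * h (n, w n) q)" for w :: "nat \<Rightarrow> int" and q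
  define t where "t = (c N)^2"
  have t0: "t \<ge> 0" by (simp add: t_def)
  have fin: "finite (walks N)" by (rule finite_walks)
  have intFF: "\<And>w w'. w \<in> walks N \<Longrightarrow> w' \<in> walks N \<Longrightarrow> integrable Q (\<lambda>q. F w q * F w' q)"
    unfolding F_def by (rule EFF(2)[OF ind pm half])
  have EFF': "integral\<^sup>L Q (\<lambda>q. F w q * F w' q) = (1 + t) ^ Lg N 0 w w'" for w w'
    unfolding F_def t_def by (rule EFF(1)[OF ind pm half])
  have D: "((2::real)^N)^2 = 4^N"
  proof -
    have "(2::real)^N * 2^N = 4^N" by (simp add: power_mult_distrib[symmetric])
    then show ?thesis by (simp add: power2_eq_square)
  qed
  have Zeq: "Zpart c h N q = (\<Sum>w\<in>walks N. F w q * 1 / 2^N)" for q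
    by (simp add: Zpart_def walk_integral_def F_def)
  have Keq: "Kpart c h N q = (\<Sum>w\<in>walks N. F w q * (real_of_int (w N))^2 / 2^N)" for q
    by (simp add: Kpart_def walk_integral_def F_def)
  have "(\<integral>q. (Zpart c h N q)\<^sup>2 \<partial>Q) = integral\<^sup>L Q (\<lambda>q. (\<Sum>w\<in>walks N. F w q * 1 / 2^N)^2)"
    by (simp only: Zeq)
  also have "\<dots> = (\<Sum>w\<in>walks N. \<Sum>w'\<in>walks N. integral\<^sup>L Q (\<lambda>q. F w q * F w' q) * (1 * 1)) / (2^N)^2"
    by (rule int_sq[OF fin intFF])
  also have "\<dots> = (\<Sum>w\<in>walks N. \<Sum>w'\<in>walks N. (1 + t) ^ Lg N 0 w w') / 4^N"
    by (simp add: EFF' D)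
  also have "\<dots> \<le> (\<Sum>n=0..N. (32 * t * sqrt (real N))^n)" by (rule Zcomb[OF t0])
  finally show "(\<integral>q. (Zpart c h N q)\<^sup>2 \<partial>Q) \<le> (\<Sum>n=0..N. (32 * (c N)\<^sup>2 * sqrt (real N)) ^ n)"
    by (simp add: t_def)
  have "(\<integral>q. (Kpart c h N q)\<^sup>2 \<partial>Q) = integral\<^sup>L Q (\<lambda>q. (\<Sum>w\<in>walks N. F w q * (real_of_int (w N))^2 / 2^N)^2)"
    by (simp only: Keq)
  also have "\<dots> = (\<Sum>w\<in>walks N. \<Sum>w'\<in>walks N. integral\<^sup>L Q (\<lambda>q. F w q * F w' q) * ((real_of_int (w N))^2 * (real_of_int (w' N))^2)) / (2^N)^2"
    by (rule int_sq[OF fin intFF])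
  also have "\<dots> = (\<Sum>w\<in>walks N. \<Sum>w'\<in>walks N. (1 + t)^(Lg N 0 w w') * ((real_of_int (w N))^2 * (real_of_int (w' N))^2)) / 4^N"
    by (simp only: EFF' D)
  also have "\<dots> \<le> (real N)^2 * (\<Sum>n=0..N. (32 * t * sqrt (real N))^n)" by (rule Kcomb[OF t0 N])
  finally show "(\<integral>q. (Kpart c h N q)\<^sup>2 \<partial>Q) \<le> (real N)\<^sup>2 * (\<Sum>n=0..N. (32 * (c N)\<^sup>2 * sqrt (real N)) ^ n)"
    by (simp add: t_def)
qed simp


end
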